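(* Let $p$ be an odd prime and $\alpha$ an indeterminate over $\mathbb F_p$. For $\gamma\in\{\alpha,-\alpha\}$ let \[ G^{(\gamma)}(X)=-\sum_{k=1}^{p-1}\frac{1}{k}\,\frac{X^{k}}{\prod_{s=1}^{k-1}b_{1,s}(\gamma)}\in\mathbb F_p(\alpha)[X] \] (empty product equal to $1$). Then \[ \prod_{k=1}^{p-1}(1+\alpha/k)^{k}\cdot G^{(\alpha)}(X)=-X^{p}\cdot G^{(-\alpha)}\!\left(\frac{1-\alpha^{p-1}}{X}\right) \] in the polynomial ring $\mathbb F_p(\alpha)[X]$.
   Context: $\mathbb F_p$ is the field of $p$ elements, $\binom{x}{m}=x(x-1)\cdots(x-m+1)/m!$. For integers $0<r,s<p$ (interpreted as elements of $\mathbb F_p$), $b_{r,s}(\alpha)=\sum_{k=0}^{p-1}(-r/s)^k\binom{r\alpha-1}{p-1-k}\binom{s\alpha-1}{k}\in\mathbb F_p[\alpha]$; $b_{1,s}(-\alpha)$ denotes the substitution of $-\alpha$ for $\alpha$. *)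

theory Defs
  imports "Berlekamp_Zassenhaus.Finite_Field" "HOL-Computational_Algebra.Fraction_Field"
begin

definition pbinom :: "'a::field poly \<Rightarrow> nat \<Rightarrow> 'a poly" where
  "pbinom q m = smult (inverse (of_nat (fact m))) (\<Prod>i<m. q - [:of_nat i:])"

definition bpoly :: "nat \<Rightarrow> nat \<Rightarrow> 'p::prime_card mod_ring poly" where
  "bpoly r s = (\<Sum>k=0..CARD('p) - 1.
      smult ((- (of_nat r / of_nat s)) ^ k)
        (pbinom (smult (of_nat r) [:0, 1:] - 1) (CARD('p) - 1 - k)
         * pbinom (smult (of_nat s) [:0, 1:] - 1) k))"

text \<open>G^(gamma)(X) in F_p(alpha)[X]; the argument b gives s \<mapsto> b_{1,s}(gamma).\<close>
definition Gpoly :: "(nat \<Rightarrow> 'p::prime_card mod_ring poly) \<Rightarrow> 'p mod_ring poly fract poly" where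
  "Gpoly b = - (\<Sum>k=1..CARD('p) - 1.
      monom (inverse (of_nat k) / (\<Prod>s=1..k-1. to_fract (b s))) k)"

end

theory Submission
  imports Defs "Berlekamp_Zassenhaus.Berlekamp_Type_Based"
begin


definition gb :: "'a::field \<Rightarrow> nat \<Rightarrow> 'a" where
  "gb x m = (\<Prod>i<m. x - of_nat i) / of_nat (fact m)"

lemma poly_pbinom: "poly (pbinom q m) x = gb (poly q x) m"
  unfolding pbinom_def gb_def by (simp add: poly_prod divide_inverse mult.commute)

lemma fact_nz:
  assumes "j < CARD('p::prime_card)"
  shows "(of_nat (fact j) :: 'p mod_ring) \<noteq> 0"
proof
  assume "(of_nat (fact j) :: 'p mod_ring) = 0"
  hence "CARD('p) dvd fact j" by (rule of_nat_0_mod_ring_dvd)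
  with prime_dvd_fact_iff[OF prime_card[where 'a='p]] assms show False by auto
qed

lemma nat_nz:
  assumes "0 < j" "j < CARD('p::prime_card)"
  shows "(of_nat j :: 'p mod_ring) \<noteq> 0"
proof
  assume "(of_nat j :: 'p mod_ring) = 0"
  hence "CARD('p) dvd j" by (rule of_nat_0_mod_ring_dvd)
  with assms show False by (auto dest: dvd_imp_le)
qed

lemma of_nat_inj_mod:
  assumes "(of_nat m :: 'p::prime_card mod_ring) = of_nat n" "m < CARD('p)" "n < CARD('p)"
  shows "m = n"
proof -
  from assms(1) have "[m = n] (mod CHAR('p mod_ring))" by (simp only: of_nat_eq_iff_cong_CHAR)
  hence "m mod CARD('p) = n mod CARD('p)" by (simp add: cong_def)
  with assms(2,3) show ?thesis by simp
qed

lemma gb_Suc: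
  assumes "Suc m < CARD('p::prime_card)"
  shows "gb ((x::'p mod_ring) + 1) (Suc m) = gb x (Suc m) + gb x m"
proof -
  define Q where "Q = (\<Prod>i<m. x - of_nat i)"
  have f1: "(of_nat (fact m) :: 'p mod_ring) \<noteq> 0" using fact_nz[where 'p='p and j=m] assms by simp
  have f2: "(of_nat (fact (Suc m)) :: 'p mod_ring) \<noteq> 0" using fact_nz[where 'p='p and j="Suc m"] assms by simp
  have a: "(\<Prod>i<Suc m. x + 1 - of_nat i) = (x+1) * Q"
    unfolding Q_def by (subst prod.lessThan_Suc_shift) (simp add: algebra_simps)
  have b: "(\<Prod>i<Suc m. x - of_nat i) = Q * (x - of_nat m)"
    unfolding Q_def by simp
  have c: "(of_nat (fact (Suc m)) :: 'p mod_ring) = (of_nat m + 1) * of_nat (fact m)"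
    by (simp add: algebra_simps)
  have d: "(of_nat m + 1 :: 'p mod_ring) \<noteq> 0" using f2 c by auto
  have e: "(of_nat m + 1) * of_nat (fact m) \<noteq> (0::'p mod_ring)" using f1 d by simp
  have g: "\<And>M F. (M+1)*F \<noteq> (0::'p mod_ring) \<Longrightarrow> F \<noteq> 0 \<Longrightarrow>
     (x+1)*Q / ((M+1)*F) = Q*(x-M)/((M+1)*F) + Q / F"
    by (simp add: field_simps)
  show ?thesis unfolding gb_def a b Q_def[symmetric] c
    using g[OF e f1] by simp
qed

definition eqp :: "nat \<Rightarrow> 'a::comm_ring_1 poly \<Rightarrow> 'a poly \<Rightarrow> bool" where
  "eqp n f g \<longleftrightarrow> (\<forall>k<n. coeff f k = coeff g k)"

lemma eqp_refl: "eqp n f f" by (simp add: eqp_def)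
lemma eqp_trans: "eqp n f g \<Longrightarrow> eqp n g h \<Longrightarrow> eqp n f h" by (simp add: eqp_def)
lemma eqp_mult1: "eqp n f g \<Longrightarrow> eqp n (f*h) (g*h)"
  unfolding eqp_def coeff_mult by (auto intro!: sum.cong)
lemma eqp_mult2: "eqp n f g \<Longrightarrow> eqp n (h*f) (h*g)"
  using eqp_mult1[of n f g h] by (simp add: mult.commute)
lemma eqp_mult: "eqp n f f' \<Longrightarrow> eqp n g g' \<Longrightarrow> eqp n (f*g) (f'*g')"
  by (meson eqp_mult1 eqp_mult2 eqp_trans)

definition Eser :: "'a::field \<Rightarrow> 'a \<Rightarrow> nat \<Rightarrow> 'a poly" where
  "Eser c x n = (\<Sum>k<n. monom (c^k * gb x k) k)"

lemma coeff_Eser: "coeff (Eser c x n) k = (if k < n then c^k * gb x k else 0)"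
  unfolding Eser_def by (simp add: coeff_sum coeff_monom)

lemma Eser_step:
  "eqp CARD('p::prime_card) (Eser c ((x::'p mod_ring)+1) CARD('p)) ([:1, c:] * Eser c x CARD('p))"
  unfolding eqp_def
proof (intro allI impI)
  fix k assume k: "k < CARD('p)"
  have e: "[:1, c:] * Eser c x CARD('p) = Eser c x CARD('p) + pCons 0 (smult c (Eser c x CARD('p)))"
    by (simp add: mult_pCons_left)
  show "coeff (Eser c (x + 1) CARD('p)) k = coeff ([:1, c:] * Eser c x CARD('p)) k"
  proof (cases k)
    case 0 thus ?thesis unfolding e by (simp add: coeff_Eser gb_def)
  next
    case (Suc m)
    thus ?thesis unfolding e using k gb_Suc[of m x]
      by (simp add: coeff_Eser algebra_simps)
  qed
qed

lemma Eser_steps: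
  "eqp CARD('p::prime_card) (Eser c ((x::'p mod_ring) + of_nat n) CARD('p)) ([:1, c:]^n * Eser c x CARD('p))"
proof (induction n)
  case 0 thus ?case by (simp add: eqp_refl)
next
  case (Suc n)
  have "eqp CARD('p) (Eser c ((x + of_nat n) + 1) CARD('p)) ([:1, c:] * Eser c (x + of_nat n) CARD('p))"
    by (rule Eser_step)
  moreover have "eqp CARD('p) ([:1, c:] * Eser c (x + of_nat n) CARD('p)) ([:1, c:] * ([:1, c:]^n * Eser c x CARD('p)))"
    by (rule eqp_mult2[OF Suc.IH])
  ultimately show ?case by (auto simp: algebra_simps intro: eqp_trans)
qed



lemma prod_of_nat_choose:
  "(\<Prod>i<j. (of_nat n - of_nat i :: 'a::comm_ring_1)) = of_nat (fact j * (n choose j))"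
proof -
  have "(\<Prod>i<j. (int n - int i)) = int (fact j * (n choose j))"
  proof (induction j)
    case 0 thus ?case by simp
  next
    case (Suc j)
    have bin: "Suc j * (n choose Suc j) = (n - j) * (n choose j)"
      using binomial_absorption[of j n] binomial_absorb_comp[of n j] by simp
    have "(\<Prod>i<Suc j. (int n - int i)) = int (fact j * (n choose j)) * (int n - int j)"
      using Suc by simp
    also have "\<dots> = int (fact j * ((n - j) * (n choose j)))"
    proof (cases "j \<le> n")
      case True thus ?thesis by (simp add: of_nat_diff algebra_simps)
    next
      case False thus ?thesis by simp
    qed
    also have "\<dots> = int (fact (Suc j) * (n choose Suc j))"
      by (simp only: bin[symmetric] fact_Suc) (simp add: algebra_simps)
    finally show ?case .
  qed
  hence "of_int (\<Prod>i<j. (int n - int i)) = (of_int (int (fact j * (n choose j))) :: 'a)" by simp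
  thus ?thesis by (simp only: of_int_prod of_int_diff of_int_of_nat_eq)
qed

lemma gb_of_nat:
  assumes "j < CARD('p::prime_card)"
  shows "gb (of_nat n :: 'p mod_ring) j = of_nat (n choose j)"
  unfolding gb_def prod_of_nat_choose using fact_nz[OF assms] by simp

definition Df :: "('a::ring_1 \<Rightarrow> 'a) \<Rightarrow> 'a \<Rightarrow> 'a" where
  "Df f x = f (x + 1) - f x"

lemma newton:
  fixes f :: "'a::comm_ring_1 \<Rightarrow> 'a"
  shows "f (of_nat n) = (\<Sum>j\<le>n. of_nat (n choose j) * (Df^^j) f 0)"
proof (induction n arbitrary: f)
  case 0 thus ?case by simp
next
  case (Suc n)
  define a where "a j = (Df^^j) f 0" for j
  have Dj: "(Df^^j) (Df f) 0 = a (Suc j)" for j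
    unfolding a_def by (simp add: funpow_Suc_right del: funpow.simps)
  have "f (of_nat (Suc n)) = Df f (of_nat n) + f (of_nat n)"
    by (simp add: Df_def add.commute)
  also have "\<dots> = (\<Sum>j\<le>n. of_nat (n choose j) * a (Suc j)) + (\<Sum>j\<le>n. of_nat (n choose j) * a j)"
    using Suc[of "Df f"] Suc[of f] Dj by (simp add: a_def)
  also have "(\<Sum>j\<le>n. of_nat (n choose j) * a j) = (\<Sum>j\<le>Suc n. of_nat (n choose j) * a j)"
    by (simp add: binomial_eq_0)
  also have "\<dots> = a 0 + (\<Sum>j\<le>n. of_nat (n choose Suc j) * a (Suc j))"
    by (subst sum.atMost_Suc_shift) simp
  also have "(\<Sum>j\<le>n. of_nat (n choose j) * a (Suc j)) + (a 0 + (\<Sum>j\<le>n. of_nat (n choose Suc j) * a (Suc j)))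
      = a 0 + (\<Sum>j\<le>n. of_nat (Suc n choose Suc j) * a (Suc j))"
    by (simp add: sum.distrib algebra_simps)
  also have "\<dots> = (\<Sum>j\<le>Suc n. of_nat (Suc n choose j) * a j)"
    by (subst sum.atMost_Suc_shift) simp
  finally show ?case by (simp add: a_def)
qed

lemma coeff_mult_low:
  assumes "\<forall>i<a. coeff f i = 0" "\<forall>i<b. coeff g i = 0" "n < a + b"
  shows "coeff (f * g) n = 0"
  unfolding coeff_mult
proof (rule sum.neutral, intro ballI)
  fix i assume "i \<in> {..n}"
  show "coeff f i * coeff g (n - i) = 0"
  proof (cases "i < a")
    case True thus ?thesis using assms(1) by simp
  next
    case False hence "n - i < b" using assms(3) \<open>i \<in> {..n}\<close> by auto
    thus ?thesis using assms(2) by simp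
  qed
qed

lemma coeff_pow_low:
  assumes "coeff (f::'a::comm_ring_1 poly) 0 = 0" "coeff f 1 = 0"
  shows "\<forall>n<2*j. coeff (f^j) n = 0"
proof (induction j)
  case 0 thus ?case by simp
next
  case (Suc j)
  have f: "\<forall>i<2. coeff f i = 0" using assms by (auto simp: less_2_cases_iff)
  show ?case
    using coeff_mult_low[OF f Suc.IH] by auto
qed

lemma coeff_lin_pow:
  "coeff ([:1, c:]^n) 0 = 1 \<and> coeff ([:1, c:]^n) 1 = of_nat n * (c::'a::comm_ring_1)"
proof (induction n)
  case 0 thus ?case by simp
next
  case (Suc n)
  have e: "[:1, c:]^Suc n = [:1, c:]^n + pCons 0 (smult c ([:1, c:]^n))"
    by (simp add: mult_pCons_left)
  show ?case unfolding e using Suc by (simp add: coeff_pCons algebra_simps)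
qed

lemma degree_pbinom:
  assumes "degree q \<le> 1"
  shows "degree (pbinom q m) \<le> m"
proof -
  have "degree (\<Prod>i<m. q - [:of_nat i:]) \<le> (\<Sum>i<m. degree (q - [:of_nat i:]))"
    using degree_prod_sum_le[of "{..<m}" "\<lambda>i. q - [:of_nat i:]"] by (simp add: o_def)
  also have "\<dots> \<le> (\<Sum>i<m. 1)"
  proof (intro sum_mono)
    fix i assume "i \<in> {..<m}"
    show "degree (q - [:of_nat i:]) \<le> 1"
      using assms degree_diff_le_max[of q "[:of_nat i:]"] by simp
  qed
  finally show ?thesis unfolding pbinom_def using degree_smult_le order_trans by fastforce
qed



lemma card_pos: "0 < CARD('p::prime_card)" "2 \<le> CARD('p)"
  using prime_gt_1_nat[OF prime_card[where 'a='p]] by auto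

lemma poly_bpoly:
  "poly (bpoly 1 s0) (x::'p::prime_card mod_ring) = (\<Sum>k=0..CARD('p)-1. (-(1/of_nat s0))^k *
      (gb (x - 1) (CARD('p)-1-k) * gb (of_nat s0 * x - 1) k))"
  unfolding bpoly_def by (simp add: poly_sum poly_pbinom ac_simps)

definition Gf :: "nat \<Rightarrow> 'p::prime_card mod_ring \<Rightarrow> 'p mod_ring poly" where
  "Gf s0 x = Eser 1 (x-1) CARD('p) * Eser (-(1/of_nat s0)) (of_nat s0 * x - 1) CARD('p)"

definition Pp :: "nat \<Rightarrow> 'p::prime_card mod_ring poly" where
  "Pp s0 = [:1,1:] * [:1, -(1/of_nat s0):]^s0"

lemma beta_coeff:
  "poly (bpoly 1 s0) (x::'p::prime_card mod_ring) = coeff (Gf s0 x) (CARD('p)-1)"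
proof -
  let ?p = "CARD('p)"
  let ?c = "-(1/of_nat s0) :: 'p mod_ring"
  have "coeff (Gf s0 x) (?p-1) = (\<Sum>i=0..?p-1. gb (x-1) i * (?c^(?p-1-i) * gb (of_nat s0 * x - 1) (?p-1-i)))"
    unfolding Gf_def coeff_mult atMost_atLeast0
  proof (intro sum.cong refl)
    fix i assume "i \<in> {0..?p-1}"
    hence "i < ?p" "?p - 1 - i < ?p" using card_pos[where 'p='p] by auto
    thus "coeff (Eser 1 (x - 1) ?p) i * coeff (Eser ?c (of_nat s0 * x - 1) ?p) (?p - 1 - i) =
      gb (x - 1) i * (?c ^ (?p - 1 - i) * gb (of_nat s0 * x - 1) (?p - 1 - i))"
      by (simp add: coeff_Eser)
  qed
  also have "\<dots> = (\<Sum>i=0..?p-1. gb (x-1) (?p-1-(?p-1-i)) * (?c^(?p-1-i) * gb (of_nat s0 * x - 1) (?p-1-i)))"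
    by (intro sum.cong refl) (use card_pos[where 'p='p] in auto)
  also have "\<dots> = (\<Sum>k=0..?p-1. gb (x-1) (?p-1-k) * (?c^k * gb (of_nat s0 * x - 1) k))"
    by (subst (2) sum.atLeastAtMost_rev) simp
  finally show ?thesis unfolding poly_bpoly by (simp add: algebra_simps)
qed

lemma Gf_step:
  "eqp CARD('p) (Gf s0 ((x::'p::prime_card mod_ring)+1)) (Pp s0 * Gf s0 x)"
proof -
  let ?p = "CARD('p)"
  let ?c = "-(1/of_nat s0) :: 'p mod_ring"
  have 1: "eqp ?p (Eser 1 ((x-1)+1) ?p) ([:1,1:] * Eser 1 (x-1) ?p)" by (rule Eser_step)
  have 2: "eqp ?p (Eser ?c ((of_nat s0 * x - 1) + of_nat s0) ?p) ([:1,?c:]^s0 * Eser ?c (of_nat s0 * x - 1) ?p)"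
    by (rule Eser_steps)
  have e1: "Gf s0 (x+1) = Eser 1 ((x-1)+1) ?p * Eser ?c ((of_nat s0 * x - 1) + of_nat s0) ?p"
    unfolding Gf_def by (simp add: algebra_simps)
  have e2: "Pp s0 * Gf s0 x = ([:1,1:] * Eser 1 (x-1) ?p) * ([:1,?c:]^s0 * Eser ?c (of_nat s0 * x - 1) ?p)"
    unfolding Gf_def Pp_def by (simp only: ac_simps)
  show ?thesis unfolding e1 e2 by (rule eqp_mult[OF 1 2])
qed

lemma Dpow:
  "(Df^^j) (\<lambda>x. coeff (R * Gf s0 x) (CARD('p)-1)) =
   (\<lambda>x::'p::prime_card mod_ring. coeff (R * (Pp s0 - 1)^j * Gf s0 x) (CARD('p)-1))"
proof (induction j arbitrary: R)
  case 0 thus ?case by simp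
next
  case (Suc j)
  have "Df (\<lambda>x. coeff (R * Gf s0 x) (CARD('p)-1)) = (\<lambda>x::'p mod_ring. coeff ((R * (Pp s0 - 1)) * Gf s0 x) (CARD('p)-1))"
  proof
    fix x :: "'p mod_ring"
    have "eqp CARD('p) (R * Gf s0 (x+1)) (R * (Pp s0 * Gf s0 x))" by (rule eqp_mult2[OF Gf_step])
    hence "coeff (R * Gf s0 (x+1)) (CARD('p)-1) = coeff (R * (Pp s0 * Gf s0 x)) (CARD('p)-1)"
      unfolding eqp_def by simp
    thus "Df (\<lambda>x. coeff (R * Gf s0 x) (CARD('p)-1)) x = coeff ((R * (Pp s0 - 1)) * Gf s0 x) (CARD('p)-1)"
      unfolding Df_def by (simp add: algebra_simps)
  qed
  hence "(Df^^Suc j) (\<lambda>x. coeff (R * Gf s0 x) (CARD('p)-1)) = (Df^^j) (\<lambda>x::'p mod_ring. coeff ((R * (Pp s0 - 1)) * Gf s0 x) (CARD('p)-1))"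
    by (simp only: funpow_Suc_right comp_apply)
  also have "\<dots> = (\<lambda>x. coeff (R * (Pp s0 - 1) * (Pp s0 - 1)^j * Gf s0 x) (CARD('p)-1))"
    by (rule Suc.IH)
  finally show ?case by (simp only: power_Suc mult.assoc)
qed

lemma Pp_coeffs:
  assumes "(of_nat s0 :: 'p::prime_card mod_ring) \<noteq> 0"
  shows "coeff (Pp s0 - 1 :: 'p mod_ring poly) 0 = 0" "coeff (Pp s0 - 1 :: 'p mod_ring poly) 1 = 0"
proof -
  let ?c = "-(1/of_nat s0) :: 'p mod_ring"
  have e: "Pp s0 = [:1, ?c:]^s0 + pCons 0 ([:1, ?c:]^s0)"
    unfolding Pp_def by (simp add: mult_pCons_left)
  show "coeff (Pp s0 - 1 :: 'p mod_ring poly) 0 = 0"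
    unfolding e using coeff_lin_pow[of ?c s0] by simp
  show "coeff (Pp s0 - 1 :: 'p mod_ring poly) 1 = 0"
    unfolding e using coeff_lin_pow[of ?c s0] assms by (simp add: coeff_pCons field_simps)
qed

lemma Dpow_vanish:
  assumes "(of_nat s0 :: 'p::prime_card mod_ring) \<noteq> 0" "CARD('p) - 1 < 2 * j"
  shows "(Df^^j) (\<lambda>x. poly (bpoly 1 s0) x) (x::'p mod_ring) = 0"
proof -
  have eq: "(\<lambda>x. poly (bpoly 1 s0) x) = (\<lambda>x::'p mod_ring. coeff (1 * Gf s0 x) (CARD('p)-1))"
    by (rule ext) (simp only: beta_coeff mult_1_left)
  have "(Df^^j) (\<lambda>x. poly (bpoly 1 s0) x) x = coeff ((Pp s0 - 1)^j * Gf s0 x) (CARD('p)-1)"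
    unfolding eq Dpow by (simp only: mult_1_left)
  also have "\<dots> = 0"
    by (rule coeff_mult_low[where b=0]) (use coeff_pow_low[OF Pp_coeffs[OF assms(1)], of j] assms(2) in auto)
  finally show ?thesis .
qed

lemma degree_bpoly: "degree (bpoly 1 s0 :: 'p::prime_card mod_ring poly) \<le> CARD('p) - 1"
  unfolding bpoly_def
proof (intro degree_sum_le, simp)
  fix k assume k: "k \<in> {0..CARD('p)-1}"
  let ?q1 = "smult (of_nat 1) [:0, 1:] - 1 :: 'p mod_ring poly"
  let ?q2 = "smult (of_nat s0) [:0, 1:] - 1 :: 'p mod_ring poly"
  have d1: "degree ?q1 \<le> 1" using degree_diff_le_max[of "smult (of_nat 1) [:0, 1:]" 1]
    by (simp del: of_nat_1) 
  have a: "degree (smult (of_nat s0) [:0,1::'p mod_ring:]) \<le> 1" by (rule order_trans[OF degree_smult_le]) simp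
  have d2: "degree ?q2 \<le> 1" by (rule degree_diff_le[OF a]) simp
  have "degree (pbinom ?q1 (CARD('p) - 1 - k) * pbinom ?q2 k) \<le> (CARD('p) - 1 - k) + k"
    using degree_mult_le[of "pbinom ?q1 (CARD('p) - 1 - k)" "pbinom ?q2 k"] degree_pbinom[OF d1] degree_pbinom[OF d2]
    by (meson add_mono order_trans)
  also have "\<dots> = CARD('p) - 1" using k by simp
  finally show "degree (smult ((- (of_nat 1 / of_nat s0)) ^ k) (pbinom ?q1 (CARD('p) - 1 - k) * pbinom ?q2 k)) \<le> CARD('p) - 1"
    using degree_smult_le order_trans by blast
qed



lemma degree_bpoly_half:
  assumes s0: "(of_nat s0 :: 'p::prime_card mod_ring) \<noteq> 0"
  shows "degree (bpoly 1 s0 :: 'p mod_ring poly) \<le> (CARD('p) - 1) div 2"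
proof -
  let ?p = "CARD('p)"
  let ?h = "(CARD('p) - 1) div 2"
  let ?\<beta> = "\<lambda>x::'p mod_ring. poly (bpoly 1 s0) x"
  define D where "D j = (Df^^j) ?\<beta> 0" for j
  define N where "N = (\<Sum>j\<le>?h. smult (D j) (pbinom [:0,1:] j))"
  have hp: "?h < ?p" using card_pos[where 'p='p] by auto
  have Dz: "D j = 0" if "?h < j" for j
    unfolding D_def by (rule Dpow_vanish[OF s0]) (use that in presburger)
  have degN: "degree N \<le> ?h"
    unfolding N_def
  proof (rule degree_sum_le, simp)
    fix j assume j: "j \<in> {..?h}"
    have "degree (pbinom [:0,1::'p mod_ring:] j) \<le> j" by (rule degree_pbinom) simp
    thus "degree (smult (D j) (pbinom [:0,1:] j)) \<le> ?h"
      using j degree_smult_le[of "D j" "pbinom [:0,1::'p mod_ring:] j"] by auto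
  qed
  have vals: "poly (bpoly 1 s0) x = poly N x" for x :: "'p mod_ring"
  proof -
    obtain n where n: "n < ?p" "x = of_nat n" using surj_of_nat_mod_ring by blast
    have "poly N x = (\<Sum>j\<le>?h. of_nat (n choose j) * D j)"
      unfolding N_def n(2) poly_sum poly_smult poly_pbinom
      by (intro sum.cong refl) (use hp in \<open>auto simp: gb_of_nat mult.commute\<close>)
    also have "\<dots> = (\<Sum>j\<le>n+?h. of_nat (n choose j) * D j)"
      by (rule sum.mono_neutral_left) (auto simp: Dz)
    also have "(\<Sum>j\<le>n. of_nat (n choose j) * D j) = (\<Sum>j\<le>n+?h. of_nat (n choose j) * D j)"
      by (rule sum.mono_neutral_left) (auto simp: binomial_eq_0)
    moreover have "poly (bpoly 1 s0) x = (\<Sum>j\<le>n. of_nat (n choose j) * D j)"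
      unfolding n(2) D_def by (rule newton)
    ultimately show ?thesis by simp
  qed
  have "bpoly 1 s0 = N"
    by (rule poly_eqI_degree[where A=UNIV]) (use vals degN hp degree_bpoly[of s0, where 'p='p] card_pos[where 'p='p] in auto)
  thus ?thesis using degN by simp
qed

lemma gb_zero: "n < m \<Longrightarrow> gb (of_nat n :: 'a::field) m = 0"
  unfolding gb_def by (subst prod_zero) auto

lemma bpoly_root:
  assumes a: "1 \<le> a" "a < CARD('p::prime_card)" and r: "a + (s0 * a mod CARD('p)) \<le> CARD('p)"
    and s0: "\<not> CARD('p) dvd s0"
  shows "poly (bpoly 1 s0) (of_nat a :: 'p mod_ring) = 0"
proof -
  let ?p = "CARD('p)"
  define r where "r = s0 * a mod ?p"
  have "\<not> ?p dvd a" using a by (auto dest: dvd_imp_le)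
  hence "\<not> ?p dvd s0 * a" using s0 prime_dvd_mult_iff[OF prime_card[where 'a='p]] by blast
  hence r1: "1 \<le> r" unfolding r_def by (simp add: dvd_eq_mod_eq_0 Suc_le_eq)
  have e1: "(of_nat a - 1 :: 'p mod_ring) = of_nat (a - 1)" using a by (simp add: of_nat_diff)
  have "(of_nat s0 * of_nat a :: 'p mod_ring) = of_nat r"
    unfolding r_def of_nat_mult[symmetric]
    using of_nat_mod_CHAR[where x="s0*a" and 'a="'p mod_ring"] by simp
  hence e2: "(of_nat s0 * of_nat a - 1 :: 'p mod_ring) = of_nat (r - 1)" using r1 by (simp add: of_nat_diff)
  show ?thesis unfolding poly_bpoly e1 e2
  proof (rule sum.neutral, intro ballI)
    fix k assume k: "k \<in> {0..?p-1}"
    show "(- (1 / of_nat s0)) ^ k * (gb (of_nat (a - 1) :: 'p mod_ring) (?p - 1 - k) * gb (of_nat (r - 1)) k) = 0"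
    proof (cases "a - 1 < ?p - 1 - k")
      case True thus ?thesis by (simp add: gb_zero)
    next
      case False
      hence "r - 1 < k" using r r_def k r1 a by auto
      thus ?thesis by (simp add: gb_zero)
    qed
  qed
qed

lemma prod_Suc_fact: "(\<Prod>i<m. (of_nat i + 1 :: 'a::comm_semiring_1)) = of_nat (fact m)"
  by (induction m) (auto simp: algebra_simps)

lemma gb_minus1:
  assumes "m < CARD('p::prime_card)"
  shows "gb (-1 :: 'p mod_ring) m = (-1)^m"
proof -
  have "(\<Prod>i<m. (-1 - of_nat i :: 'p mod_ring)) = (\<Prod>i<m. (-1) * (of_nat i + 1))"
    by (intro prod.cong refl) (simp add: algebra_simps)
  also have "\<dots> = (-1)^m * of_nat (fact m)"
    by (simp only: prod.distrib prod_constant card_lessThan prod_Suc_fact)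
  finally show ?thesis unfolding gb_def using fact_nz[OF assms] by simp
qed

lemma bpoly_at0:
  assumes s: "1 \<le> s0" "s0 + 1 < CARD('p::prime_card)" and odd: "odd (CARD('p))"
  shows "poly (bpoly 1 s0) (0 :: 'p mod_ring) = 1"
proof -
  let ?p = "CARD('p)"
  let ?c = "-(1/of_nat s0) :: 'p mod_ring"
  have s0nz: "(of_nat s0 :: 'p mod_ring) \<noteq> 0" using nat_nz[where 'p='p and j=s0] s by simp
  have c1: "?c \<noteq> 1"
  proof
    assume "?c = 1"
    hence "-1 = (of_nat s0 :: 'p mod_ring)" using s0nz by (simp add: field_simps)
    hence "(of_nat s0 :: 'p mod_ring) + 1 = 0" by (metis add.left_inverse)
    hence "(of_nat (s0 + 1) :: 'p mod_ring) = 0" by (simp add: add.commute)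
    thus False using nat_nz[where 'p='p and j="s0+1"] s by simp
  qed
  have ev: "even (?p - 1)" using odd card_pos[where 'p='p] by simp
  have "poly (bpoly 1 s0) (0 :: 'p mod_ring) = (\<Sum>k=0..?p-1. ?c^k)"
    unfolding poly_bpoly
  proof (intro sum.cong refl)
    fix k assume k: "k \<in> {0..?p-1}"
    hence "k < ?p" "?p - 1 - k < ?p" using card_pos[where 'p='p] by auto
    have kk: "?p-1-k+k = ?p-1" using k by simp
    have "gb (0 - 1 :: 'p mod_ring) (?p - 1 - k) * gb (of_nat s0 * 0 - 1) k = (-1)^(?p-1-k) * (-1)^k"
      using \<open>k < ?p\<close> \<open>?p - 1 - k < ?p\<close> by (simp add: gb_minus1)
    also have "\<dots> = (-1)^(?p-1-k+k)" by (simp add: power_add)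
    also have "\<dots> = (-1)^(?p-1)" by (simp only: kk)
    also have "\<dots> = 1" by (rule neg_one_even_power[OF ev])
    finally show "?c ^ k * (gb (0 - 1) (?p - 1 - k) * gb (of_nat s0 * 0 - 1) k) = ?c ^ k" by simp
  qed
  also have "{0..?p-1} = {..<?p}" using card_pos[where 'p='p] by auto
  also have "(\<Sum>k<?p. ?c^k) = (?c^?p - 1) / (?c - 1)" by (rule geometric_sum[OF c1])
  also have "\<dots> = 1" using c1 by (simp add: fermat_theorem_mod_ring)
  finally show ?thesis .
qed



definition Sset :: "nat \<Rightarrow> nat \<Rightarrow> nat set" where
  "Sset p s0 = {a \<in> {1..p-1}. a + (s0 * a mod p) \<le> p}"

lemma of_nat_card_0: "(of_nat CARD('p::prime_card) :: 'p mod_ring) = 0" by simp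

lemma of_nat_mod_card: "(of_nat (x mod CARD('p::prime_card)) :: 'p mod_ring) = of_nat x"
  using of_nat_mod_CHAR[where x=x and 'a="'p mod_ring"] by simp

lemma rpos:
  assumes "1 \<le> a" "a < CARD('p::prime_card)" "1 \<le> s0" "s0 < CARD('p)"
  shows "1 \<le> s0 * a mod CARD('p)"
proof -
  have "\<not> CARD('p) dvd a" "\<not> CARD('p) dvd s0" using assms by (auto dest: dvd_imp_le)
  hence "\<not> CARD('p) dvd s0 * a" using prime_dvd_mult_iff[OF prime_card[where 'a='p]] by blast
  thus ?thesis by (simp add: dvd_eq_mod_eq_0 Suc_le_eq)
qed

lemma r_neg:
  assumes "1 \<le> a" "a < CARD('p::prime_card)" "1 \<le> s0" "s0 < CARD('p)"
  shows "s0 * (CARD('p) - a) mod CARD('p) = CARD('p) - s0 * a mod CARD('p)"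
proof (rule of_nat_inj_mod[where 'p='p])
  let ?p = "CARD('p)"
  have r1: "1 \<le> s0 * a mod ?p" by (rule rpos[OF assms])
  have "(of_nat (s0 * (?p - a) mod ?p) :: 'p mod_ring) = of_nat s0 * (of_nat ?p - of_nat a)"
    unfolding of_nat_mod_card using assms by (simp add: of_nat_diff)
  also have "\<dots> = - (of_nat s0 * of_nat a)" by (simp add: algebra_simps)
  also have "\<dots> = of_nat ?p - of_nat (s0 * a mod ?p)" unfolding of_nat_mod_card by simp
  also have "\<dots> = of_nat (?p - s0 * a mod ?p)" by (simp add: of_nat_diff)
  finally show "(of_nat (s0 * (?p - a) mod ?p) :: 'p mod_ring) = of_nat (?p - s0 * a mod ?p)" .
  show "s0 * (?p - a) mod ?p < ?p" using card_pos[where 'p='p] by simp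
  show "?p - s0 * a mod ?p < ?p" using r1 by simp
qed

lemma S_or_neg:
  assumes "1 \<le> a" "a < CARD('p::prime_card)" "1 \<le> s0" "s0 < CARD('p)"
  shows "a \<in> Sset CARD('p) s0 \<or> CARD('p) - a \<in> Sset CARD('p) s0"
  using r_neg[OF assms] rpos[OF assms] assms unfolding Sset_def by auto

lemma S_sym:
  assumes a: "1 \<le> a" "a < CARD('p::prime_card)" and s: "1 \<le> s0" "s0 + 1 < CARD('p)"
  shows "(a \<in> Sset CARD('p) (CARD('p) - 1 - s0)) = (a \<in> Sset CARD('p) s0)"
proof -
  let ?p = "CARD('p)"
  define r where "r = s0 * a mod ?p"
  define r' where "r' = (?p - 1 - s0) * a mod ?p"
  have r1: "1 \<le> r" unfolding r_def by (rule rpos) (use a s in auto)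
  have r'1: "1 \<le> r'" unfolding r'_def by (rule rpos) (use a s in auto)
  have rp: "r < ?p" "r' < ?p" unfolding r_def r'_def using card_pos[where 'p='p] by auto
  have e0: "?p - 1 - s0 = ?p - (s0+1)" by simp
  have e: "(of_nat (?p - 1 - s0) :: 'p mod_ring) = -1 - of_nat s0"
    unfolding e0 using s by (simp add: of_nat_diff)
  have key: "(of_nat r' :: 'p mod_ring) = - (of_nat a + of_nat r)"
    unfolding r_def r'_def of_nat_mod_card of_nat_mult e by (simp add: algebra_simps)
 have m1: "(a \<in> Sset ?p s0) = (a + r \<le> ?p)" using a unfolding Sset_def r_def by auto
  have m2: "(a \<in> Sset ?p (?p - 1 - s0)) = (a + r' \<le> ?p)" using a unfolding Sset_def r'_def by auto
  consider "a + r < ?p" | "a + r = ?p" | "a + r > ?p" by linarith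
  thus ?thesis
  proof cases
    case 1
    have "r' = ?p - (a + r)"
    proof (rule of_nat_inj_mod[where 'p='p])
      show "(of_nat r' :: 'p mod_ring) = of_nat (?p - (a + r))" using 1 key by (simp add: of_nat_diff)
    qed (use rp 1 a in auto)
    thus ?thesis unfolding m1 m2 using 1 by linarith
  next
    case 2
    have "(of_nat r' :: 'p mod_ring) = 0" using key 2
      by (metis add.right_inverse minus_add_distrib of_nat_add of_nat_card_0 add.commute neg_equal_0_iff_equal)
    hence "r' = 0" using of_nat_inj_mod[where 'p='p and m=r' and n=0] rp card_pos[where 'p='p] by simp
    thus ?thesis using r'1 by simp
  next
    case 3
    have "r' = 2 * ?p - (a + r)"
    proof (rule of_nat_inj_mod[where 'p='p])
      show "(of_nat r' :: 'p mod_ring) = of_nat (2 * ?p - (a + r))" using 3 key rp a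
        by (simp add: of_nat_diff)
    qed (use rp 3 a in auto)
    thus ?thesis unfolding m1 m2 using 3 rp by linarith
  qed
qed



lemma S_sub: "Sset p s0 \<subseteq> {1..p-1}" unfolding Sset_def by auto

lemma card_S_ge:
  assumes "1 \<le> s0" "s0 < CARD('p::prime_card)"
  shows "(CARD('p) - 1) div 2 \<le> card (Sset CARD('p) s0)"
proof -
  let ?p = "CARD('p)"
  let ?S = "Sset ?p s0"
  have "{1..?p-1} \<subseteq> ?S \<union> (\<lambda>a. ?p - a) ` ?S"
  proof
    fix a assume a: "a \<in> {1..?p-1}"
    hence a': "1 \<le> a" "a < ?p" using card_pos[where 'p='p] by auto
    from S_or_neg[OF a' assms] show "a \<in> ?S \<union> (\<lambda>a. ?p - a) ` ?S"
    proof
      assume "?p - a \<in> ?S"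
      moreover have "a = ?p - (?p - a)" using a' by simp
      ultimately show ?thesis by blast
    qed auto
  qed
  hence "card {1..?p-1} \<le> card (?S \<union> (\<lambda>a. ?p - a) ` ?S)"
    by (intro card_mono) (auto simp: Sset_def)
  also have "\<dots> \<le> card ?S + card ((\<lambda>a. ?p - a) ` ?S)" by (rule card_Un_le)
  also have "\<dots> \<le> card ?S + card ?S" using card_image_le[of ?S "\<lambda>a. ?p - a"] by (simp add: Sset_def)
  finally show ?thesis by simp
qed

lemma bpoly_factor:
  assumes s: "1 \<le> s0" "s0 + 1 < CARD('p::prime_card)" and odd: "odd (CARD('p))"
  shows "bpoly 1 s0 = (\<Prod>a\<in>Sset CARD('p) s0. [:1, - inverse (of_nat a :: 'p mod_ring):])"
proof -
  let ?p = "CARD('p)"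
  let ?S = "Sset ?p s0"
  let ?P = "\<Prod>a\<in>?S. [:1, - inverse (of_nat a :: 'p mod_ring):]"
  let ?A = "insert 0 ((of_nat :: nat \<Rightarrow> 'p mod_ring) ` ?S)"
  have fin: "finite ?S" unfolding Sset_def by auto
  have s0nz: "(of_nat s0 :: 'p mod_ring) \<noteq> 0" using nat_nz[where 'p='p and j=s0] s by simp
  have inj: "inj_on (of_nat :: nat \<Rightarrow> 'p mod_ring) ?S"
    by (rule inj_onI) (rule of_nat_inj_mod, auto simp: Sset_def)
  have n0: "0 \<notin> (of_nat :: nat \<Rightarrow> 'p mod_ring) ` ?S"
    using nat_nz[where 'p='p] by (auto simp: Sset_def)
  have cardA: "card ?A = card ?S + 1"
    using fin inj n0 by (simp add: card_image)
  have degP: "degree ?P \<le> card ?S"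
  proof -
    have "degree ?P \<le> (\<Sum>a\<in>?S. degree [:1, - inverse (of_nat a :: 'p mod_ring):])"
      using degree_prod_sum_le[OF fin, of "\<lambda>a. [:1, - inverse (of_nat a :: 'p mod_ring):]"] by (simp add: o_def)
    also have "\<dots> \<le> (\<Sum>a\<in>?S. 1)" by (intro sum_mono) simp
    finally show ?thesis by simp
  qed
  have degb: "degree (bpoly 1 s0 :: 'p mod_ring poly) \<le> card ?S"
    using degree_bpoly_half[OF s0nz] card_S_ge[of s0, where 'p='p] s by simp
  show ?thesis
  proof (rule poly_eqI_degree[where A="?A"])
    fix x assume "x \<in> ?A"
    then consider "x = 0" | a where "a \<in> ?S" "x = of_nat a" by blast
    thus "poly (bpoly 1 s0) x = poly ?P x"
    proof cases
      case 1 thus ?thesis using bpoly_at0[OF s odd] by (simp add: poly_prod)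
    next
      case 2
      have a: "1 \<le> a" "a < ?p" "a + (s0 * a mod ?p) \<le> ?p" using 2(1) card_pos[where 'p='p] by (auto simp: Sset_def)
      have nd: "\<not> ?p dvd s0" using s by (auto dest: dvd_imp_le)
      have "poly (bpoly 1 s0) x = 0" unfolding 2(2) by (rule bpoly_root[OF a nd])
      moreover have "poly ?P x = 0"
        unfolding poly_prod 2(2)
        by (rule prod_zero) (use fin 2(1) nat_nz[where 'p='p and j=a] a in \<open>auto intro!: bexI[of _ a]\<close>)
      ultimately show ?thesis by simp
    qed
  qed (use cardA degP degb in auto)
qed



lemma count_S:
  assumes a: "1 \<le> a" "a < CARD('p::prime_card)"
  shows "card {s \<in> {1..CARD('p)-2}. a \<in> Sset CARD('p) s} = CARD('p) - a - 1"
proof -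
  let ?p = "CARD('p)"
  define f where "f s = s * a mod ?p" for s
  have anz: "(of_nat a :: 'p mod_ring) \<noteq> 0" using nat_nz[where 'p='p] a by simp
  have A: "f s \<noteq> ?p - a" if "1 \<le> s" "s + 1 < ?p" for s
  proof
    assume "f s = ?p - a"
    hence "(of_nat (f s) :: 'p mod_ring) = of_nat (?p - a)" by simp
    hence "of_nat s * of_nat a = (- of_nat a :: 'p mod_ring)" unfolding f_def of_nat_mod_card using a by (simp add: of_nat_diff)
    hence "(of_nat s + 1) * of_nat a = (0 :: 'p mod_ring)" by (simp add: algebra_simps)
    hence "(of_nat (s + 1) :: 'p mod_ring) = 0" using anz by (simp add: add.commute)
    thus False using nat_nz[where 'p='p and j="s+1"] that by simp
  qed
  have B: "f (?p - 1) = ?p - a"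
  proof (rule of_nat_inj_mod[where 'p='p])
    show "(of_nat (f (?p - 1)) :: 'p mod_ring) = of_nat (?p - a)"
      unfolding f_def of_nat_mod_card using a card_pos[where 'p='p] by (simp add: of_nat_diff algebra_simps)
  qed (use a card_pos[where 'p='p] in \<open>auto simp: f_def\<close>)
  have fpos: "1 \<le> f s" "f s < ?p" if "s \<in> {1..?p-1}" for s
    unfolding f_def using rpos[of a s, where 'p='p] a that card_pos[where 'p='p] by (auto simp: mult.commute)
  have eqset: "{s \<in> {1..?p-2}. a \<in> Sset ?p s} = {s \<in> {1..?p-1}. f s < ?p - a}"
  proof (intro Set.set_eqI iffI)
    fix s assume "s \<in> {s \<in> {1..?p-2}. a \<in> Sset ?p s}"
    hence s: "1 \<le> s" "s + 1 < ?p" "a + f s \<le> ?p" using card_pos[where 'p='p] by (auto simp: Sset_def f_def)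
    thus "s \<in> {s \<in> {1..?p-1}. f s < ?p - a}" using A[OF s(1,2)] by auto
  next
    fix s assume s: "s \<in> {s \<in> {1..?p-1}. f s < ?p - a}"
    hence "s \<noteq> ?p - 1" using B by auto
    thus "s \<in> {s \<in> {1..?p-2}. a \<in> Sset ?p s}" using s a by (auto simp: Sset_def f_def)
  qed
  have inj: "inj_on f {1..?p-1}"
  proof (rule inj_onI)
    fix s t assume st: "s \<in> {1..?p-1}" "t \<in> {1..?p-1}" "f s = f t"
    hence "(of_nat (f s) :: 'p mod_ring) = of_nat (f t)" by simp
    hence "of_nat s * of_nat a = (of_nat t * of_nat a :: 'p mod_ring)" unfolding f_def of_nat_mod_card by simp
    hence "(of_nat s :: 'p mod_ring) = of_nat t" using anz by simp
    thus "s = t" by (rule of_nat_inj_mod) (use st card_pos[where 'p='p] in auto)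
  qed
  have img: "f ` {1..?p-1} = {1..?p-1}"
  proof (rule card_subset_eq)
    show "f ` {1..?p-1} \<subseteq> {1..?p-1}" using fpos by fastforce
    show "card (f ` {1..?p-1}) = card {1..?p-1}" by (rule card_image[OF inj])
  qed auto
  have img2: "f ` {s \<in> {1..?p-1}. f s < ?p - a} = {1..<?p-a}"
  proof
    show "f ` {s \<in> {1..?p-1}. f s < ?p - a} \<subseteq> {1..<?p-a}" using fpos by auto
    show "{1..<?p-a} \<subseteq> f ` {s \<in> {1..?p-1}. f s < ?p - a}"
    proof
      fix y assume y: "y \<in> {1..<?p-a}"
      hence "y \<in> f ` {1..?p-1}" unfolding img by auto
      then obtain s where "s \<in> {1..?p-1}" "y = f s" by blast
      thus "y \<in> f ` {s \<in> {1..?p-1}. f s < ?p - a}" using y by auto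
    qed
  qed
  have "card {s \<in> {1..?p-1}. f s < ?p - a} = card (f ` {s \<in> {1..?p-1}. f s < ?p - a})"
    by (rule card_image[symmetric]) (rule inj_on_subset[OF inj], auto)
  also have "\<dots> = ?p - a - 1" unfolding img2 by simp
  finally show ?thesis unfolding eqset .
qed

lemma bpoly_sym:
  assumes s: "1 \<le> s0" "s0 + 1 < CARD('p::prime_card)" and odd: "odd (CARD('p))"
  shows "(bpoly 1 (CARD('p) - 1 - s0) :: 'p mod_ring poly) = bpoly 1 s0"
proof -
  have s': "1 \<le> CARD('p) - 1 - s0" "CARD('p) - 1 - s0 + 1 < CARD('p)" using s by auto
  have "Sset CARD('p) (CARD('p) - 1 - s0) = Sset CARD('p) s0"
  proof (rule Set.set_eqI)
    fix a show "(a \<in> Sset CARD('p) (CARD('p) - 1 - s0)) = (a \<in> Sset CARD('p) s0)"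
    proof (cases "1 \<le> a \<and> a < CARD('p)")
      case True thus ?thesis using S_sym[of a s0, where 'p='p] s by blast
    next
      case False thus ?thesis unfolding Sset_def by auto
    qed
  qed
  thus ?thesis using bpoly_factor[OF s odd] bpoly_factor[OF s' odd] by simp
qed

lemma x_pow_pm1:
  assumes "(x :: 'p::prime_card mod_ring) \<noteq> 0"
  shows "x ^ (CARD('p) - 1) = 1"
proof -
  have "x * x ^ (CARD('p) - 1) = x * 1"
    using fermat_theorem_mod_ring[of x] card_pos[where 'p='p]
    by (metis One_nat_def Suc_pred mult.right_neutral power_Suc)
  thus ?thesis using assms by simp
qed

lemma W_prod:
  "([:1:] - monom 1 (CARD('p) - 1) :: 'p::prime_card mod_ring poly) =
   (\<Prod>a\<in>{1..CARD('p)-1}. [:1, - inverse (of_nat a :: 'p mod_ring):])"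
proof (rule poly_eqI_degree[where A=UNIV])
  let ?p = "CARD('p)"
  fix x :: "'p mod_ring"
  obtain n where n: "n < ?p" "x = of_nat n" using surj_of_nat_mod_ring by blast
  show "poly ([:1:] - monom 1 (?p - 1)) x = poly (\<Prod>a\<in>{1..?p-1}. [:1, - inverse (of_nat a :: 'p mod_ring):]) x"
  proof (cases "n = 0")
    case True thus ?thesis using n card_pos[where 'p='p] by (simp add: poly_prod poly_monom)
  next
    case False
    have xnz: "x \<noteq> 0" using nat_nz[where 'p='p and j=n] n False by simp
    have "poly ([:1:] - monom 1 (?p - 1)) x = 0" using x_pow_pm1[OF xnz] by (simp add: poly_monom)
    moreover have "poly (\<Prod>a\<in>{1..?p-1}. [:1, - inverse (of_nat a :: 'p mod_ring):]) x = 0"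
      unfolding poly_prod n(2)
      by (rule prod_zero) (use n False nat_nz[where 'p='p and j=n] in \<open>auto intro!: bexI[of _ n]\<close>)
    ultimately show ?thesis by simp
  qed
next
  let ?p = "CARD('p)"
  have "degree ([:1:] - monom 1 (?p - 1) :: 'p mod_ring poly) \<le> ?p - 1"
    by (rule degree_diff_le) (auto intro: order_trans[OF degree_monom_le])
  thus "degree ([:1:] - monom 1 (?p - 1) :: 'p mod_ring poly) < card (UNIV :: 'p mod_ring set)"
    using card_pos[where 'p='p] by simp
  have "degree (\<Prod>a\<in>{1..?p-1}. [:1, - inverse (of_nat a :: 'p mod_ring):]) \<le> (\<Sum>a\<in>{1..?p-1}. degree [:1, - inverse (of_nat a :: 'p mod_ring):])"
    using degree_prod_sum_le[of "{1..?p-1}" "\<lambda>a. [:1, - inverse (of_nat a :: 'p mod_ring):]"] by (simp add: o_def)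
  also have "\<dots> \<le> (\<Sum>a\<in>{1..?p-1}. 1)" by (intro sum_mono) simp
  finally show "degree (\<Prod>a\<in>{1..?p-1}. [:1, - inverse (of_nat a :: 'p mod_ring):]) < card (UNIV :: 'p mod_ring set)"
    using card_pos[where 'p='p] by simp
qed



lemma bb_neg:
  assumes s: "1 \<le> s0" "s0 + 1 < CARD('p::prime_card)" and odd: "odd (CARD('p))"
  shows "(bpoly 1 s0 :: 'p mod_ring poly) * pcompose (bpoly 1 s0) [:0,-1:] = [:1:] - monom 1 (CARD('p) - 1)"
proof (rule poly_eqI_degree[where A=UNIV])
  let ?p = "CARD('p)"
  have s0nz: "(of_nat s0 :: 'p mod_ring) \<noteq> 0" using nat_nz[where 'p='p and j=s0] s by simp
  have nd: "\<not> ?p dvd s0" using s by (auto dest: dvd_imp_le)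
  fix x :: "'p mod_ring"
  obtain n where n: "n < ?p" "x = of_nat n" using surj_of_nat_mod_ring by blast
  show "poly (bpoly 1 s0 * pcompose (bpoly 1 s0) [:0,-1:]) x = poly ([:1:] - monom 1 (?p - 1)) x"
  proof (cases "n = 0")
    case True thus ?thesis using n card_pos[where 'p='p] bpoly_at0[OF s odd]
      by (simp add: poly_pcompose poly_monom)
  next
    case False
    have xnz: "x \<noteq> 0" using nat_nz[where 'p='p and j=n] n False by simp
    have "poly ([:1:] - monom 1 (?p - 1)) x = 0" using x_pow_pm1[OF xnz] by (simp add: poly_monom)
    moreover have "poly (bpoly 1 s0) x = 0 \<or> poly (bpoly 1 s0) (-x) = 0"
    proof -
      have a: "1 \<le> n" "n < ?p" using n False by auto
      have dis: "n \<in> Sset ?p s0 \<or> ?p - n \<in> Sset ?p s0" by (rule S_or_neg[OF a]) (use s in auto)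
      from dis show ?thesis
      proof
        assume "n \<in> Sset ?p s0"
        hence "poly (bpoly 1 s0) (of_nat n :: 'p mod_ring) = 0"
          by (intro bpoly_root[OF _ _ _ nd]) (auto simp: Sset_def)
        thus ?thesis using n by simp
      next
        assume "?p - n \<in> Sset ?p s0"
        hence "poly (bpoly 1 s0) (of_nat (?p - n) :: 'p mod_ring) = 0"
          by (intro bpoly_root[OF _ _ _ nd]) (auto simp: Sset_def)
        moreover have "(of_nat (?p - n) :: 'p mod_ring) = -x" using n by (simp add: of_nat_diff)
        ultimately show ?thesis by simp
      qed
    qed
    ultimately show ?thesis by (auto simp: poly_pcompose)
  qed
next
  let ?p = "CARD('p)"
  have s0nz: "(of_nat s0 :: 'p mod_ring) \<noteq> 0" using nat_nz[where 'p='p and j=s0] s by simp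
  have d: "degree (bpoly 1 s0 :: 'p mod_ring poly) \<le> (?p - 1) div 2" by (rule degree_bpoly_half[OF s0nz])
  have "degree ((bpoly 1 s0 :: 'p mod_ring poly) * pcompose (bpoly 1 s0) [:0,-1:]) \<le> (?p - 1) div 2 + (?p - 1) div 2"
    using degree_mult_le[of "bpoly 1 s0 :: 'p mod_ring poly" "pcompose (bpoly 1 s0) [:0,-1:]"] d
    by (simp add: degree_pcompose)
  also have "\<dots> < ?p" using card_pos[where 'p='p] by simp
  finally show "degree ((bpoly 1 s0 :: 'p mod_ring poly) * pcompose (bpoly 1 s0) [:0,-1:]) < card (UNIV :: 'p mod_ring set)"
    by simp
  have "degree ([:1:] - monom 1 (?p - 1) :: 'p mod_ring poly) \<le> ?p - 1"
    by (rule degree_diff_le) (auto intro: order_trans[OF degree_monom_le])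
  thus "degree ([:1:] - monom 1 (?p - 1) :: 'p mod_ring poly) < card (UNIV :: 'p mod_ring set)"
    using card_pos[where 'p='p] by simp
qed

lemma B_id:
  assumes odd: "odd (CARD('p::prime_card))"
  shows "(\<Prod>k\<in>{1..CARD('p)-1}. [:1, inverse (of_nat k :: 'p mod_ring):]^k) =
     ([:1:] - monom 1 (CARD('p) - 1)) * (\<Prod>s\<in>{1..CARD('p)-2}. bpoly 1 s)"
proof -
  let ?p = "CARD('p)"
  define f where "f a = [:1, - inverse (of_nat a :: 'p mod_ring):]" for a
  define R where "R s a = (a + (s * a mod ?p) \<le> ?p)" for s a
  have SR: "Sset ?p s = {a \<in> {1..?p-1}. R s a}" for s unfolding Sset_def R_def by simp
  have "(\<Prod>s\<in>{1..?p-2}. bpoly 1 s) = (\<Prod>s\<in>{1..?p-2}. \<Prod>a\<in>{a \<in> {1..?p-1}. R s a}. f a)"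
  proof (intro prod.cong refl)
    fix s assume "s \<in> {1..?p-2}"
    hence s: "1 \<le> s" "s + 1 < ?p" using card_pos[where 'p='p] by auto
    show "bpoly 1 s = (\<Prod>a\<in>{a \<in> {1..?p-1}. R s a}. f a)"
      unfolding bpoly_factor[OF s odd] SR f_def ..
  qed
  also have "\<dots> = (\<Prod>a\<in>{1..?p-1}. \<Prod>s | s \<in> {1..?p-2} \<and> R s a. f a)"
    by (rule prod.swap_restrict) auto
  also have "\<dots> = (\<Prod>a\<in>{1..?p-1}. f a ^ (?p - a - 1))"
  proof (intro prod.cong refl)
    fix a assume a: "a \<in> {1..?p-1}"
    hence a': "1 \<le> a" "a < ?p" using card_pos[where 'p='p] by auto
    have "{s. s \<in> {1..?p-2} \<and> R s a} = {s \<in> {1..?p-2}. a \<in> Sset ?p s}"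
      using a unfolding SR by auto
    thus "(\<Prod>s | s \<in> {1..?p-2} \<and> R s a. f a) = f a ^ (?p - a - 1)"
      using count_S[OF a'] by simp
  qed
  finally have P: "(\<Prod>s\<in>{1..?p-2}. bpoly 1 s) = (\<Prod>a\<in>{1..?p-1}. f a ^ (?p - a - 1))" .
  have W: "([:1:] - monom 1 (?p - 1) :: 'p mod_ring poly) = (\<Prod>a\<in>{1..?p-1}. f a)"
    unfolding f_def by (rule W_prod)
  have "([:1:] - monom 1 (?p - 1)) * (\<Prod>s\<in>{1..?p-2}. bpoly 1 s) = (\<Prod>a\<in>{1..?p-1}. f a ^ (?p - a))"
    unfolding P W prod.distrib[symmetric]
  proof (intro prod.cong refl)
    fix a assume "a \<in> {1..?p-1}"
    hence "?p - a = Suc (?p - a - 1)" by auto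
    thus "f a * f a ^ (?p - a - 1) = f a ^ (?p - a)" by (metis power_Suc)
  qed
  also have "\<dots> = (\<Prod>k\<in>{1..?p-1}. [:1, inverse (of_nat k :: 'p mod_ring):]^k)"
  proof (rule prod.reindex_bij_witness[where i="\<lambda>k. ?p - k" and j="\<lambda>a. ?p - a"])
    fix a assume a: "a \<in> {1..?p-1}"
    show "?p - (?p - a) = a" using a by auto
    show "?p - a \<in> {1..?p-1}" using a by auto
    have "a \<le> ?p" using a by auto
    hence "(of_nat (?p - a) :: 'p mod_ring) = - of_nat a" by (simp add: of_nat_diff)
    thus "[:1, inverse (of_nat (?p - a) :: 'p mod_ring):] ^ (?p - a) = f a ^ (?p - a)"
      unfolding f_def by simp
  qed auto
  finally show ?thesis by simp
qed



lemma bpoly_nz: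
  assumes "1 \<le> s0" "s0 + 1 < CARD('p::prime_card)" "odd (CARD('p))"
  shows "(bpoly 1 s0 :: 'p mod_ring poly) \<noteq> 0"
  using bpoly_at0[OF assms] by auto

lemma step2:
  assumes odd: "odd (CARD('p::prime_card))" and k: "1 \<le> k" "k < CARD('p)"
  shows "(\<Prod>j\<in>{1..CARD('p)-1}. [:1, inverse (of_nat j :: 'p mod_ring):]^j) *
         (\<Prod>s\<in>{1..CARD('p)-k-1}. pcompose (bpoly 1 s) [:0,-1:]) =
         ([:1:] - monom 1 (CARD('p) - 1))^(CARD('p)-k) * (\<Prod>s\<in>{1..k-1}. bpoly 1 s)"
proof -
  let ?p = "CARD('p)"
  let ?m = "?p - k"
  let ?W = "[:1:] - monom 1 (?p - 1) :: 'p mod_ring poly"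
  let ?b = "\<lambda>s. bpoly 1 s :: 'p mod_ring poly"
  let ?C = "\<Prod>j\<in>{1..?p-1}. [:1, inverse (of_nat j :: 'p mod_ring):]^j"
  define Q where "Q = (\<Prod>s\<in>{1..?m-1}. ?b s)"
  have Qnz: "Q \<noteq> 0" unfolding Q_def
    by (subst prod_zero_iff) (use bpoly_nz[OF _ _ odd] k in auto)
  have 1: "(\<Prod>s\<in>{1..?m-1}. pcompose (?b s) [:0,-1:]) * Q = ?W^(?m-1)"
  proof -
    have "(\<Prod>s\<in>{1..?m-1}. pcompose (?b s) [:0,-1:]) * Q = (\<Prod>s\<in>{1..?m-1}. ?b s * pcompose (?b s) [:0,-1:])"
      unfolding Q_def prod.distrib by (simp add: ac_simps)
    also have "\<dots> = (\<Prod>s\<in>{1..?m-1}. ?W)"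
      by (intro prod.cong refl bb_neg[OF _ _ odd]) (use k in auto)
    finally show ?thesis by simp
  qed
  have 2: "Q = (\<Prod>s\<in>{k..?p-2}. ?b s)"
    unfolding Q_def
  proof (rule prod.reindex_bij_witness[where i="\<lambda>s. ?p - 1 - s" and j="\<lambda>s. ?p - 1 - s"])
    fix s assume s: "s \<in> {1..?m-1}"
    show "?b (?p - 1 - s) = ?b s" by (rule bpoly_sym[OF _ _ odd]) (use s k in auto)
  qed (use k in auto)
  have 3: "(\<Prod>s\<in>{1..k-1}. ?b s) * (\<Prod>s\<in>{k..?p-2}. ?b s) = (\<Prod>s\<in>{1..?p-2}. ?b s)"
  proof -
    have "{1..?p-2} = {1..k-1} \<union> {k..?p-2}" using k by auto
    thus ?thesis by (simp add: prod.union_disjoint)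
  qed
  have m1: "?m = Suc (?m - 1)" using k by simp
  have "?C * (\<Prod>s\<in>{1..?m-1}. pcompose (?b s) [:0,-1:]) * Q = ?W * (\<Prod>s\<in>{1..?p-2}. ?b s) * ?W^(?m-1)"
    by (simp only: mult.assoc 1 B_id[OF odd])
  also have "\<dots> = ?W^?m * (\<Prod>s\<in>{1..?p-2}. ?b s)"
    by (subst (2) m1) (simp add: ac_simps)
  also have "\<dots> = ?W^?m * (\<Prod>s\<in>{1..k-1}. ?b s) * Q"
    unfolding 2 3[symmetric] by (simp add: mult.assoc)
  finally show ?thesis using Qnz by simp
qed



lemma to_fract_prod: "to_fract (prod f A) = (\<Prod>x\<in>A. to_fract (f x))"
  by (cases "finite A", induction A rule: finite_induct) simp_all

lemma to_fract_power: "to_fract (x ^ n) = to_fract x ^ n"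
  by (induction n) simp_all

lemma to_fract_of_nat: "(of_nat n :: 'a::idom fract) = to_fract (of_nat n)"
  by (induction n) simp_all

lemma poly_map_poly_sum:
  fixes h :: "'a::zero \<Rightarrow> 'b::comm_semiring_1"
  assumes "h 0 = 0" "degree q \<le> N"
  shows "poly (map_poly h q) z = (\<Sum>i\<le>N. h (coeff q i) * z^i)"
proof -
  have "poly (map_poly h q) z = (\<Sum>i\<le>degree (map_poly h q). coeff (map_poly h q) i * z^i)"
    by (rule poly_altdef)
  also have "\<dots> = (\<Sum>i\<le>N. coeff (map_poly h q) i * z^i)"
  proof (rule sum.mono_neutral_left)
    show "{..degree (map_poly h q)} \<subseteq> {..N}" using degree_map_poly_le[of h q] assms(2) by auto
    show "\<forall>i\<in>{..N} - {..degree (map_poly h q)}. coeff (map_poly h q) i * z ^ i = 0"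
      by (auto simp: coeff_eq_0)
  qed simp
  finally show ?thesis by (simp add: coeff_map_poly[of h, OF assms(1)])
qed

lemma theorem6_aux:
  fixes p :: nat
  assumes pc: "p = CARD('p::prime_card)" and "odd p"
  defines "\<alpha> \<equiv> to_fract [:0, 1:] :: 'p mod_ring poly fract"
  shows "to_fract (smult (\<Prod>k=1..p-1. (1 + \<alpha> / of_nat k) ^ k) (Gpoly (\<lambda>s. bpoly 1 s)))
       = - to_fract (monom 1 p) *
         poly (map_poly (\<lambda>c. to_fract [:c:]) (Gpoly (\<lambda>s. pcompose (bpoly 1 s) [:0, -1:])))
              (to_fract [:1 - \<alpha> ^ (p - 1):] / to_fract [:0, 1:])"
proof -
  have odd: "odd CARD('p)" using assms by simp
  define A where "A = {1..p-1}"
  define h where "h c = (to_fract [:c:] :: 'p mod_ring poly fract poly fract)" for c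
  define X where "X = (to_fract [:0, 1:] :: 'p mod_ring poly fract poly fract)"
  define W where "W = ([:1:] - monom 1 (p - 1) :: 'p mod_ring poly)"
  define C where "C = (\<Prod>j\<in>{1..p-1}. [:1, inverse (of_nat j :: 'p mod_ring):]^j)"
  define Dp where "Dp k = (\<Prod>s=1..k-1. to_fract (bpoly 1 s :: 'p mod_ring poly))" for k
  define Dm where "Dm k = (\<Prod>s=1..k-1. to_fract (pcompose (bpoly 1 s :: 'p mod_ring poly) [:0,-1:]))" for k
  have h0: "h 0 = 0" unfolding h_def by simp
  have hmul: "h a * h b = h (a * b)" for a b unfolding h_def by (simp flip: to_fract_mult)
  have hneg: "h (-a) = - h a" for a unfolding h_def by (simp flip: to_fract_uminus)
  have hpow: "h a ^ n = h (a ^ n)" for a n unfolding h_def by (simp flip: to_fract_power add: poly_const_pow)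
  have tmon: "to_fract (monom c n) = h c * X^n" for c n
  proof -
    have "monom c n = [:c:] * [:0,1:]^n" by (simp add: monom_altdef)
    thus ?thesis unfolding h_def X_def by (simp only: to_fract_mult to_fract_power)
  qed
  have Xnz: "X \<noteq> 0" unfolding X_def by simp
  have cK: "(\<Prod>k=1..p-1. (1 + \<alpha> / of_nat k) ^ k) = to_fract C"
    unfolding C_def to_fract_prod to_fract_power
  proof (intro prod.cong refl arg_cong[where f="\<lambda>x. x ^ _"])
    fix k assume k: "k \<in> {1..p-1}"
    define c where "c = (of_nat k :: 'p mod_ring)"
    have kp: "1 \<le> k" "k < CARD('p)" using k pc card_pos[where 'p='p] by auto
    have cnz: "c \<noteq> 0" unfolding c_def using nat_nz[where 'p='p and j=k] kp by auto
    have ofk: "(of_nat k :: 'p mod_ring poly fract) = to_fract [:c:]"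
      unfolding c_def to_fract_of_nat of_nat_poly ..
    have "to_fract [:1, inverse c:] * to_fract [:c:] = to_fract [:c:] + \<alpha>"
      unfolding \<alpha>_def using cnz by (simp flip: to_fract_mult to_fract_add)
    moreover have "to_fract [:c:] \<noteq> (0 :: 'p mod_ring poly fract)" using cnz by simp
    ultimately show "1 + \<alpha> / of_nat k = to_fract [:1, inverse (of_nat k):]"
      unfolding ofk c_def[symmetric] by (simp add: field_simps)
  qed
  have Wa: "to_fract [:1 - \<alpha> ^ (p - 1):] = h (to_fract W)"
    unfolding h_def W_def \<alpha>_def by (simp add: to_fract_power monom_altdef)

  have finA: "finite A" unfolding A_def by simp
  have Ap: "k \<in> A \<Longrightarrow> 1 \<le> k \<and> k < p" for k unfolding A_def using pc card_pos[where 'p='p] by auto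
  have Dpnz: "Dp k \<noteq> 0" if "k \<in> A" for k
    unfolding Dp_def to_fract_prod[symmetric] to_fract_eq_0_iff
    by (subst prod_zero_iff) (use bpoly_nz[OF _ _ odd] Ap[OF that] pc in auto)
  have Dmnz: "Dm k \<noteq> 0" if "k \<in> A" for k
  proof -
    have "pcompose (bpoly 1 s :: 'p mod_ring poly) [:0,-1:] \<noteq> 0" if "s \<in> {1..k-1}" for s
    proof
      assume "pcompose (bpoly 1 s :: 'p mod_ring poly) [:0,-1:] = 0"
      hence "poly (pcompose (bpoly 1 s :: 'p mod_ring poly) [:0,-1:]) 0 = 0" by simp
      moreover have "poly (bpoly 1 s :: 'p mod_ring poly) 0 = 1"
        by (rule bpoly_at0[OF _ _ odd]) (use that Ap[OF \<open>k \<in> A\<close>] pc in auto)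
      ultimately show False by (simp add: poly_pcompose)
    qed
    thus ?thesis unfolding Dm_def to_fract_prod[symmetric] to_fract_eq_0_iff
      by (subst prod_zero_iff) auto
  qed
  have key: "-(to_fract C * (inverse (of_nat k) / Dp k)) = inverse (of_nat (p-k)) / Dm (p-k) * to_fract W ^ (p-k)"
    if kA: "k \<in> A" for k
  proof -
    have k: "1 \<le> k" "k < CARD('p)" using Ap[OF kA] pc by auto
    have "C * (\<Prod>s\<in>{1..p-k-1}. pcompose (bpoly 1 s) [:0,-1:]) = W^(p-k) * (\<Prod>s\<in>{1..k-1}. bpoly 1 s)"
      unfolding C_def W_def pc by (rule step2[OF odd k])
    hence "to_fract (C * (\<Prod>s\<in>{1..p-k-1}. pcompose (bpoly 1 s) [:0,-1:])) = to_fract (W^(p-k) * (\<Prod>s\<in>{1..k-1}. bpoly 1 s))"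
      by (rule arg_cong)
    hence s2: "to_fract C * Dm (p-k) = to_fract W ^ (p-k) * Dp k"
      unfolding Dm_def Dp_def to_fract_mult to_fract_prod to_fract_power .
    have "(of_nat p :: 'p mod_ring poly fract) = 0"
      unfolding to_fract_of_nat of_nat_poly pc by simp
    hence "(of_nat (p-k) :: 'p mod_ring poly fract) = - of_nat k" using k pc by (simp add: of_nat_diff)
    hence ik: "inverse (of_nat (p-k) :: 'p mod_ring poly fract) = - inverse (of_nat k)" by simp
    have pkA: "p - k \<in> A" using k pc unfolding A_def by auto
    have "(of_nat k :: 'p mod_ring) \<noteq> 0" using nat_nz[where 'p='p and j=k] k by simp
    hence knz: "(of_nat k :: 'p mod_ring poly fract) \<noteq> 0"
      unfolding to_fract_of_nat of_nat_poly by simp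
    show ?thesis unfolding ik using s2 Dpnz[OF kA] Dmnz[OF pkA] knz by (simp add: field_simps)
  qed
  have hl: "(\<lambda>c. to_fract [:c:]) = h" by (rule ext) (simp add: h_def)
  have Xd: "(to_fract [:0, 1:] :: 'p mod_ring poly fract poly fract) = X" unfolding X_def ..
  define a where "a k = inverse (of_nat k) / Dp k" for k
  define e where "e k = inverse (of_nat k) / Dm k" for k
  have Gp: "Gpoly (\<lambda>s. bpoly 1 s) = - (\<Sum>k\<in>A. monom (a k) k)"
    unfolding Gpoly_def A_def a_def Dp_def pc ..
  have Gm: "Gpoly (\<lambda>s. pcompose (bpoly 1 s) [:0,-1:]) = - (\<Sum>k\<in>A. monom (e k) k)"
    unfolding Gpoly_def A_def e_def Dm_def pc ..
  have LHS: "to_fract (smult (\<Prod>k=1..p-1. (1 + \<alpha> / of_nat k) ^ k) (Gpoly (\<lambda>s. bpoly 1 s)))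
      = (\<Sum>k\<in>A. h (-(to_fract C * a k)) * X^k)"
    unfolding cK Gp smult_minus_right smult_sum2 smult_monom to_fract_uminus to_fract_sum tmon
    by (simp add: hneg sum_negf)
  have coeffGm: "coeff (- (\<Sum>k\<in>A. monom (e k) k)) i = (if i \<in> A then - e i else 0)" for i
    unfolding coeff_minus coeff_sum coeff_monom using finA by (simp add: sum.delta)
  have degGm: "degree (- (\<Sum>k\<in>A. monom (e k) k)) \<le> p"
    unfolding degree_minus
  proof (rule degree_sum_le[OF finA])
    fix k assume "k \<in> A"
    thus "degree (monom (e k) k) \<le> p" using Ap[of k] degree_monom_le[of "e k" k] by linarith
  qed
  have pz: "poly (map_poly h (- (\<Sum>k\<in>A. monom (e k) k))) z = (\<Sum>i\<in>A. h (- e i) * z^i)" for z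
  proof -
    have "poly (map_poly h (- (\<Sum>k\<in>A. monom (e k) k))) z = (\<Sum>i\<le>p. h (coeff (- (\<Sum>k\<in>A. monom (e k) k)) i) * z^i)"
      by (rule poly_map_poly_sum[of h, OF h0 degGm])
    also have "\<dots> = (\<Sum>i\<le>p. if i \<in> A then h (- e i) * z^i else 0)"
      unfolding coeffGm by (intro sum.cong refl) (simp add: h0)
    also have "\<dots> = (\<Sum>i\<in>{..p} \<inter> A. h (- e i) * z^i)"
      by (rule sum.inter_restrict[symmetric]) simp
    also have "{..p} \<inter> A = A" using Ap by (auto simp: less_imp_le)
    finally show ?thesis .
  qed
  have h1: "h 1 = 1" unfolding h_def by simp
  have RHS: "- to_fract (monom 1 p) * poly (map_poly (\<lambda>c. to_fract [:c:]) (Gpoly (\<lambda>s. pcompose (bpoly 1 s) [:0, -1:])))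
              (to_fract [:1 - \<alpha> ^ (p - 1):] / to_fract [:0, 1:])
      = (\<Sum>i\<in>A. h (e i * to_fract W ^ i) * X^(p-i))"
    unfolding hl Xd Gm pz Wa tmon h1 sum_distrib_left
  proof (intro sum.cong refl)
    fix i assume iA: "i \<in> A"
    have ip: "i \<le> p" using Ap[OF iA] by simp
    have Xp: "X^p = X^(p-i) * X^i" using ip by (simp flip: power_add)
    have Xi: "X^i \<noteq> 0" using Xnz by simp
    show "- (1 * X ^ p) * (h (- e i) * (h (to_fract W) / X) ^ i) = h (e i * to_fract W ^ i) * X ^ (p - i)"
      unfolding Xp hneg power_divide hpow hmul[symmetric] using Xi by (simp add: field_simps)
  qed
  have reidx: "(\<Sum>i\<in>A. h (e i * to_fract W ^ i) * X^(p-i)) = (\<Sum>k\<in>A. h (e (p-k) * to_fract W ^ (p-k)) * X^k)"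
  proof (rule sum.reindex_bij_witness[where i="\<lambda>k. p - k" and j="\<lambda>k. p - k"])
    fix k assume "k \<in> A"
    thus "p - (p - k) = k" "p - k \<in> A" using Ap unfolding A_def by auto
  next
    fix i assume "i \<in> A"
    thus "p - (p - i) = i" "p - i \<in> A" using Ap unfolding A_def by auto
  next
    fix i assume "i \<in> A"
    hence "p - (p - i) = i" using Ap[of i] by auto
    thus "h (e (p - (p - i)) * to_fract W ^ (p - (p - i))) * X ^ (p - i) = h (e i * to_fract W ^ i) * X ^ (p - i)"
      by simp
  qed
  show ?thesis unfolding LHS RHS reidx
  proof (intro sum.cong refl)
    fix k assume kA: "k \<in> A"
    show "h (- (to_fract C * a k)) * X ^ k = h (e (p - k) * to_fract W ^ (p - k)) * X ^ k"
      unfolding a_def e_def key[OF kA] ..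
  qed
qed

theorem theorem6:
  fixes p :: nat
  assumes "p = CARD('p::prime_card)" and "odd p"
  defines "\<alpha> \<equiv> to_fract [:0, 1:] :: 'p mod_ring poly fract"
  shows "to_fract (smult (\<Prod>k=1..p-1. (1 + \<alpha> / of_nat k) ^ k) (Gpoly (\<lambda>s. bpoly 1 s)))
       = - to_fract (monom 1 p) *
         poly (map_poly (\<lambda>c. to_fract [:c:]) (Gpoly (\<lambda>s. pcompose (bpoly 1 s) [:0, -1:])))
              (to_fract [:1 - \<alpha> ^ (p - 1):] / to_fract [:0, 1:])"
  unfolding \<alpha>_def by (rule theorem6_aux[OF assms(1,2)])


end
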